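(* Let $(X,\Sigma,\mu)$ be a $\sigma$-finite measure space, $n\ge1$, $b\in\mathbb{C}^n\setminus\{0\}$, $\epsilon>0$ and $h\in L^\infty(X,\mu;\mathbb{C})$. Define $q:L^2(X,\mu;\mathbb{C}^n)\to\mathbb{C}^n$ by $q(F)=\int_X h(x)\langle b,f_x\rangle f_x\,d\mu(x)$ for $F=(f_x)_{x\in X}$. Let $d\in\mathbb{C}^n$ and suppose: (i) if $d\neq0$: there exist a measurable $Y\subseteq X$ with $\dim L^2(Y,\mu;\mathbb{C})\ge n$, and measurable sets $B_1\subseteq\{z\in\mathbb{C}:\mathrm{Re}(\langle b,d\rangle z)>\epsilon,\ \mathrm{Im}(\langle b,d\rangle z)<-\epsilon\}$ and $B_2\subseteq\{z\in\mathbb{C}:\mathrm{Re}(\langle b,d\rangle z)>\epsilon,\ \mathrm{Im}(\langle b,d\rangle z)>\epsilon\}$ with $\mu((X\setminus Y)\cap h^{-1}(B_1))>0$ and $\mu((X\setminus Y)\cap h^{-1}(B_2))>0$; (ii) if $d=0$: there exists a measurable $Y\subseteq X$ with $\dim L^2(Y,\mu;\mathbb{C})\ge n$ and $h(x)$ real with $h(x)<0$ for $\mu$-a.e. $x\in Y$, and moreover either there exist measurable $B_1\subseteq\{z:\mathrm{Re}\,z>0,\ \mathrm{Im}\,z<0\}$ and $B_2\subseteq\{z:\mathrm{Re}\,z>0,\ \mathrm{Im}\,z>0\}$ with $\mu((X\setminus Y)\cap h^{-1}(B_1))>0$ and $\mu((X\setminus Y)\cap h^{-1}(B_2))>0$,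 or there exists a measurable $B_3\subseteq\{z:\mathrm{Re}\,z>0,\ \mathrm{Im}\,z=0\}$ with $\mu((X\setminus Y)\cap h^{-1}(B_3))>0$. Then there exists a continuous frame $\Phi\in\mathcal{F}^{\mathbb{C}}_{(X,\mu),n}$ with $q(\Phi)=d$.
   Context: The inner product on $\mathbb{C}^n$ is $\langle u,v\rangle=\sum_k u^k\overline{v^k}$. A family $\Phi=(\varphi_x)_{x\in X}$ in $\mathbb{C}^n$ (with measurable coordinates) is a continuous frame indexed by $(X,\mu)$ if there are $0<A\le B$ with $A\|v\|^2\le\int_X|\langle v,\varphi_x\rangle|^2d\mu(x)\le B\|v\|^2$ for all $v\in\mathbb{C}^n$. $\mathcal{F}^{\mathbb{C}}_{(X,\mu),n}$ denotes the set of such frames, viewed as a subset of $L^2(X,\mu;\mathbb{C}^n)$. $L^2(Y,\mu;\mathbb{C})$ is the $L^2$ space of the restriction of $\mu$ to $Y$. *)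

theory Defs
  imports "HOL-Analysis.Analysis"
begin

definition cinner_n :: "complex ^ 'n::finite \<Rightarrow> complex ^ 'n \<Rightarrow> complex" where
  "cinner_n u v = (\<Sum>k\<in>UNIV. u $ k * cnj (v $ k))"

definition Linf_fun :: "'a measure \<Rightarrow> ('a \<Rightarrow> complex) \<Rightarrow> bool" where
  "Linf_fun M h \<longleftrightarrow> h \<in> borel_measurable M \<and> (\<exists>C. AE x in M. cmod (h x) \<le> C)"

definition cont_frame :: "'a measure \<Rightarrow> ('a \<Rightarrow> complex ^ 'n::finite) \<Rightarrow> bool" where
  "cont_frame M \<Phi> \<longleftrightarrow>
     (\<forall>k. (\<lambda>x. \<Phi> x $ k) \<in> borel_measurable M) \<and>
     (\<integral>\<^sup>+ x. ennreal ((norm (\<Phi> x))\<^sup>2) \<partial>M) < \<infinity> \<and>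
     (\<exists>A B. 0 < A \<and> A \<le> B \<and>
        (\<forall>v. ennreal (A * (norm v)\<^sup>2) \<le> (\<integral>\<^sup>+ x. ennreal ((cmod (cinner_n v (\<Phi> x)))\<^sup>2) \<partial>M)
           \<and> (\<integral>\<^sup>+ x. ennreal ((cmod (cinner_n v (\<Phi> x)))\<^sup>2) \<partial>M) \<le> ennreal (B * (norm v)\<^sup>2)))"

definition q_map :: "'a measure \<Rightarrow> ('a \<Rightarrow> complex) \<Rightarrow> complex ^ 'n::finite
                     \<Rightarrow> ('a \<Rightarrow> complex ^ 'n) \<Rightarrow> complex ^ 'n" where
  "q_map M h b F = (\<chi> k. \<integral> x. h x * cinner_n b (F x) * (F x $ k) \<partial>M)"

text \<open>dim L^2(Y,mu;C) >= CARD('n): there are CARD('n) square-integrable functions on Y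
  which are linearly independent as elements of L^2(Y) (i.e. modulo a.e. equality on Y).\<close>
definition L2_dim_ge :: "'a measure \<Rightarrow> 'a set \<Rightarrow> 'n::finite itself \<Rightarrow> bool" where
  "L2_dim_ge M Y _ \<longleftrightarrow>
     (\<exists>f :: 'n \<Rightarrow> 'a \<Rightarrow> complex.
        (\<forall>i. f i \<in> borel_measurable M \<and> (\<integral>\<^sup>+ x\<in>Y. ennreal ((cmod (f i x))\<^sup>2) \<partial>M) < \<infinity>) \<and>
        (\<forall>c :: 'n \<Rightarrow> complex. (AE x in M. x \<in> Y \<longrightarrow> (\<Sum>i\<in>UNIV. c i * f i x) = 0) \<longrightarrow> (\<forall>i. c i = 0)))"

end

theory Submission imports Defs begin

lemma norm_sq_vec: "(norm (x::complex^'n::finite))\<^sup>2 = (\<Sum>i\<in>UNIV. (cmod (x$i))\<^sup>2)"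
  unfolding norm_vec_def L2_set_def by (simp add: sum_nonneg)

lemma cinner_bound: "cmod (cinner_n v p) \<le> real CARD('n) * norm v * norm (p::complex^'n::finite)"
proof -
  have "cmod (cinner_n v p) \<le> (\<Sum>k\<in>UNIV. cmod (v$k * cnj (p$k)))"
    unfolding cinner_n_def by (rule norm_sum)
  also have "\<dots> \<le> (\<Sum>k\<in>(UNIV::'n set). norm v * norm p)"
    by (intro sum_mono) (simp add: norm_mult, intro mult_mono Finite_Cartesian_Product.norm_nth_le norm_ge_zero)
  finally show ?thesis by simp
qed

lemma cinner_scaleR_right: "cinner_n v (r *\<^sub>R p) = complex_of_real r * cinner_n v p"
  unfolding cinner_n_def by (simp only: vector_scaleR_component) (simp add: scaleR_conv_of_real sum_distrib_left algebra_simps)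

lemma cinner_scaleR_left: "cinner_n (r *\<^sub>R v) p = complex_of_real r * cinner_n v p"
  unfolding cinner_n_def by (simp only: vector_scaleR_component) (simp add: scaleR_conv_of_real sum_distrib_left algebra_simps)

lemma cinner_diff_right: "cinner_n v (p - q) = cinner_n v p - cinner_n v q"
  unfolding cinner_n_def by (simp add: sum_subtractf algebra_simps)

lemma cinner_minus_right: "cinner_n v (- q) = - cinner_n v q"
  unfolding cinner_n_def by (simp add: sum_negf)

lemma meas_cnj[measurable]: "f \<in> borel_measurable M \<Longrightarrow> (\<lambda>x. cnj (f x)) \<in> borel_measurable M"
  by (rule borel_measurable_continuous_on[OF continuous_on_cnj[OF continuous_on_id]])

lemma cinner_meas[measurable]:
  assumes "\<And>k. (\<lambda>x. P x $ k) \<in> borel_measurable M"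
  shows "(\<lambda>x. cinner_n v (P x)) \<in> borel_measurable M"
  unfolding cinner_n_def using assms by measurable

lemma cont_test: "continuous_on UNIV (\<lambda>v::complex^'n::finite. Re (\<Sum>j\<in>UNIV. \<Sum>k\<in>UNIV. v$j * cnj (v$k) * a j k))"
  by (intro continuous_intros)


lemma cinner_sq_bound: "(cmod (cinner_n v p))\<^sup>2 \<le> (real CARD('n) * norm v)\<^sup>2 * (norm (p::complex^'n::finite))\<^sup>2"
proof -
  have "(cmod (cinner_n v p))\<^sup>2 \<le> (real CARD('n) * norm v * norm p)\<^sup>2"
    by (rule power_mono[OF cinner_bound norm_ge_zero])
  then show ?thesis by (simp add: power_mult_distrib)
qed

lemma comp_prod_bound: "cmod (p $ j) * cmod (p $ k) \<le> (norm (p::complex^'n::finite))\<^sup>2"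
  unfolding power2_eq_square
  by (intro mult_mono Finite_Cartesian_Product.norm_nth_le norm_ge_zero)

lemma normsq_meas:
  assumes "\<And>k. (\<lambda>x. P x $ k) \<in> borel_measurable M"
  shows "(\<lambda>x. (norm (P x :: complex^'n::finite))\<^sup>2) \<in> borel_measurable M"
proof -
  have [measurable]: "(\<lambda>x. P x $ k) \<in> borel_measurable M" for k by (rule assms)
  show ?thesis unfolding norm_sq_vec by measurable
qed

lemma frameY:
  fixes M :: "'a measure"
  assumes Y[measurable]: "Y \<in> sets M" and L: "L2_dim_ge M Y TYPE('n::finite)"
  obtains P :: "'a \<Rightarrow> complex^'n" and A :: real where
    "\<And>k. (\<lambda>x. P x $ k) \<in> borel_measurable M"
    "\<And>x. x \<notin> Y \<Longrightarrow> P x = 0"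
    "integrable M (\<lambda>x. (norm (P x))\<^sup>2)"
    "A > 0"
    "\<And>v. ennreal (A * (norm v)\<^sup>2) \<le> (\<integral>\<^sup>+ x. ennreal ((cmod (cinner_n v (P x)))\<^sup>2) \<partial>M)"
proof -
  from L obtain f :: "'n \<Rightarrow> 'a \<Rightarrow> complex" where
    fm: "\<And>i. f i \<in> borel_measurable M" and
    fi: "\<And>i. (\<integral>\<^sup>+ x\<in>Y. ennreal ((cmod (f i x))\<^sup>2) \<partial>M) < \<infinity>" and
    ind: "\<And>c. (AE x in M. x \<in> Y \<longrightarrow> (\<Sum>i\<in>UNIV. c i * f i x) = 0) \<Longrightarrow> (\<forall>i. c i = 0)"
    unfolding L2_dim_ge_def by blast
  have [measurable]: "f i \<in> borel_measurable M" for i by (rule fm)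
  define P where "P x = (\<chi> k. indicator Y x * cnj (f k x))" for x
  have Pk: "P x $ k = indicator Y x * cnj (f k x)" for x k by (simp add: P_def)
  have Pm[measurable]: "(\<lambda>x. P x $ k) \<in> borel_measurable M" for k
    unfolding Pk by measurable
  have P0: "x \<notin> Y \<Longrightarrow> P x = 0" for x by (simp add: vec_eq_iff Pk)
  have cP: "cinner_n v (P x) = indicator Y x * (\<Sum>k\<in>UNIV. v$k * f k x)" for v x
    unfolding cinner_n_def Pk by (cases "x \<in> Y") simp_all
  have nP: "(norm (P x))\<^sup>2 = (\<Sum>k\<in>UNIV. indicator Y x * (cmod (f k x))\<^sup>2)" for x
    unfolding norm_sq_vec Pk by (cases "x \<in> Y") simp_all
  have Pint: "integrable M (\<lambda>x. (norm (P x))\<^sup>2)"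
  proof -
    have "(\<integral>\<^sup>+ x. ennreal (norm ((norm (P x))\<^sup>2)) \<partial>M)
        = (\<integral>\<^sup>+ x. (\<Sum>k\<in>UNIV. ennreal ((cmod (f k x))\<^sup>2) * indicator Y x) \<partial>M)"
      by (intro nn_integral_cong) (auto simp: nP sum_nonneg split: split_indicator)
    also have "\<dots> = (\<Sum>k\<in>UNIV. (\<integral>\<^sup>+ x. ennreal ((cmod (f k x))\<^sup>2) * indicator Y x \<partial>M))"
      by (rule nn_integral_sum) auto
    also have "\<dots> < \<infinity>" using fi by simp
    finally show ?thesis using normsq_meas[OF Pm] by (simp add: integrable_iff_bounded)
  qed
  define Q where "Q v = (\<integral>x. (cmod (cinner_n v (P x)))\<^sup>2 \<partial>M)" for v
  have Qint: "integrable M (\<lambda>x. (cmod (cinner_n v (P x)))\<^sup>2)" for v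
    by (rule Bochner_Integration.integrable_bound[OF integrable_mult_right[OF Pint, of "(real CARD('n) * norm v)\<^sup>2"]])
       (auto intro!: AE_I2 simp: cinner_sq_bound)
  have Qnn: "(\<integral>\<^sup>+ x. ennreal ((cmod (cinner_n v (P x)))\<^sup>2) \<partial>M) = ennreal (Q v)" for v
    unfolding Q_def by (rule nn_integral_eq_integral[OF Qint]) simp
  have Qge: "Q v \<ge> 0" for v unfolding Q_def by (rule Bochner_Integration.integral_nonneg) simp
  define a where "a j k = (\<integral>x. cnj (P x $ j) * P x $ k \<partial>M)" for j k
  have aint: "integrable M (\<lambda>x. cnj (P x $ j) * P x $ k)" for j k
    by (rule Bochner_Integration.integrable_bound[OF Pint]) (auto intro!: AE_I2 simp: norm_mult comp_prod_bound)
  have Qform: "Q v = Re (\<Sum>j\<in>UNIV. \<Sum>k\<in>UNIV. v$j * cnj (v$k) * a j k)" for v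
  proof -
    have pt: "complex_of_real ((cmod (cinner_n v (P x)))\<^sup>2)
        = (\<Sum>j\<in>UNIV. \<Sum>k\<in>UNIV. v$j * cnj (v$k) * (cnj (P x $ j) * P x $ k))" for x
      unfolding complex_norm_square cinner_n_def by (simp add: sum_product algebra_simps)
    have "complex_of_real (Q v) = (\<integral>x. complex_of_real ((cmod (cinner_n v (P x)))\<^sup>2) \<partial>M)"
      unfolding Q_def using Qint[of v] by (rule integral_of_real[symmetric])
    also have "\<dots> = (\<Sum>j\<in>UNIV. \<Sum>k\<in>UNIV. v$j * cnj (v$k) * a j k)"
      unfolding pt a_def by (simp add: integral_sum aint)
    finally show ?thesis by (metis Re_complex_of_real)
  qed
  have Qeq: "Q = (\<lambda>v. Re (\<Sum>j\<in>UNIV. \<Sum>k\<in>UNIV. v$j * cnj (v$k) * a j k))"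
    using Qform by (rule ext)
  have Qcont: "continuous_on S Q" for S unfolding Qeq by (intro continuous_intros)
  have Qpos: "Q v > 0" if "v \<noteq> 0" for v
  proof -
    have "Q v \<noteq> 0"
    proof
      assume "Q v = 0"
      then have "AE x in M. (cmod (cinner_n v (P x)))\<^sup>2 = 0"
        using integral_nonneg_eq_0_iff_AE[OF Qint] Q_def by auto
      then have "AE x in M. x \<in> Y \<longrightarrow> (\<Sum>i\<in>UNIV. v$i * f i x) = 0"
        by eventually_elim (auto simp: cP split: split_indicator)
      then have "\<forall>i. v$i = 0" by (rule ind)
      then show False using that by (simp add: vec_eq_iff)
    qed
    then show ?thesis using Qge[of v] by simp
  qed
  define u0 :: "complex^'n" where "u0 = axis undefined 1"
  have "(\<Sum>j\<in>UNIV. (cmod (u0 $ j))\<^sup>2) = (\<Sum>j\<in>UNIV. if j = (undefined::'n) then 1 else (0::real))"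
    by (rule sum.cong) (auto simp: u0_def axis_def)
  then have u0: "norm u0 = 1" by (simp add: norm_vec_def L2_set_def)
  have "\<exists>u\<in>sphere 0 1. \<forall>y\<in>sphere 0 1. Q u \<le> Q y"
    by (rule continuous_attains_inf[OF compact_sphere]) (use u0 Qcont in auto)
  then obtain u where u: "norm u = 1" "\<And>y. norm y = 1 \<Longrightarrow> Q u \<le> Q y" by auto
  define A where "A = Q u"
  have "u \<noteq> 0" using u(1) by (metis norm_zero zero_neq_one)
  then have A0: "A > 0" using Qpos[of u] A_def by auto
  have Qscale: "Q (r *\<^sub>R v) = r\<^sup>2 * Q v" for r v
    unfolding Q_def cinner_scaleR_left by (simp add: norm_mult power_mult_distrib)
  have Abound: "A * (norm v)\<^sup>2 \<le> Q v" for v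
  proof (cases "v = 0")
    case True then show ?thesis using Qge[of v] by simp
  next
    case False
    define w where "w = (1/norm v) *\<^sub>R v"
    have nw: "norm w = 1" using False by (simp add: w_def)
    have "v = norm v *\<^sub>R w" using False by (simp add: w_def)
    then have "Q v = (norm v)\<^sup>2 * Q w" by (metis Qscale)
    moreover have "A \<le> Q w" using u(2)[OF nw] A_def by auto
    ultimately show ?thesis by (metis mult.commute mult_right_mono zero_le_power2)
  qed
  show thesis
  proof (rule that[of P A])
    show "ennreal (A * (norm v)\<^sup>2) \<le> (\<integral>\<^sup>+ x. ennreal ((cmod (cinner_n v (P x)))\<^sup>2) \<partial>M)" for v
      unfolding Qnn by (rule ennreal_leI[OF Abound])
  qed (use Pm P0 Pint A0 in auto)
qed


lemma cinner_zero_right[simp]: "cinner_n v 0 = 0"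
  unfolding cinner_n_def by simp

lemma refine:
  assumes sf: "sigma_finite_measure M" and S[measurable]: "S \<in> sets M" and Spos: "emeasure M S > 0"
    and f[measurable]: "f \<in> borel_measurable M" and fpos: "\<And>x. x \<in> S \<Longrightarrow> (f x::real) > 0"
  obtains T \<delta> where "T \<in> sets M" "T \<subseteq> S" "emeasure M T > 0" "emeasure M T < \<infinity>" "\<delta> > 0"
    "\<And>x. x \<in> T \<Longrightarrow> \<delta> \<le> f x"
proof -
  obtain A :: "nat \<Rightarrow> 'a set" where A: "range A \<subseteq> sets M" "(\<Union>i. A i) = space M"
    "\<And>i. emeasure M (A i) \<noteq> \<infinity>"
    using sigma_finite_measure.sigma_finite[OF sf] by metis
  have [measurable]: "A i \<in> sets M" for i using A(1) by auto
  define T where "T i m = S \<inter> A i \<inter> {x \<in> space M. 1 / real (Suc m) \<le> f x}" for i m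
  have Tm[measurable]: "T i m \<in> sets M" for i m unfolding T_def by measurable
  show thesis
  proof (rule ccontr)
    assume nt: "\<not> thesis"
    have Tnull: "T i m \<in> null_sets M" for i m
    proof -
      have "emeasure M (T i m) \<le> emeasure M (A i)" by (rule emeasure_mono) (auto simp: T_def)
      then have fin: "emeasure M (T i m) < \<infinity>"
        using A(3)[of i] by (simp add: le_less_trans less_top)
      have "emeasure M (T i m) = 0"
      proof (rule ccontr)
        assume "emeasure M (T i m) \<noteq> 0"
        then have "emeasure M (T i m) > 0" by (simp add: zero_less_iff_neq_zero)
        then show False using that[of "T i m" "1 / real (Suc m)"] nt fin Tm by (auto simp: T_def)
      qed
      then show ?thesis using Tm by (simp add: null_sets_def)
    qed
    then have "(\<Union>i. \<Union>m. T i m) \<in> null_sets M" by auto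
    moreover have "S \<subseteq> (\<Union>i. \<Union>m. T i m)"
    proof
      fix x assume xS: "x \<in> S"
      then have xs: "x \<in> space M" using sets.sets_into_space[OF S] by auto
      then obtain i where "x \<in> A i" using A(2) by auto
      obtain n where n: "n > 0" "inverse (real n) < f x"
        using ex_inverse_of_nat_less[OF fpos[OF xS]] by auto
      define m where "m = n - 1"
      have "inverse (real (Suc m)) < f x" using n by (simp add: m_def)
      then have "x \<in> T i m" using xS xs \<open>x \<in> A i\<close> by (auto simp: T_def inverse_eq_divide)
      then show "x \<in> (\<Union>i. \<Union>m. T i m)" by blast
    qed
    ultimately have "S \<in> null_sets M" using null_sets_subset S by blast
    then show False using Spos by (simp add: null_sets_def)
  qed
qed

lemma indicator_h_int:
  fixes h :: "'a \<Rightarrow> complex"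
  assumes hm[measurable]: "h \<in> borel_measurable M" and hb: "AE x in M. cmod (h x) \<le> C"
    and T[measurable]: "T \<in> sets M" and Tfin: "emeasure M T < \<infinity>"
  shows "integrable M (\<lambda>x. indicator T x * h x)"
proof (rule Bochner_Integration.integrable_bound[where f = "\<lambda>x. indicator T x * max C 0"])
  show "integrable M (\<lambda>x. indicator T x * max C 0 :: real)"
    using integrable_real_indicator[OF T Tfin] by auto
  show "AE x in M. norm (indicator T x * h x) \<le> norm (indicator T x * max C 0 :: real)"
    using hb by eventually_elim (auto split: split_indicator)
qed measurable

lemma Hpiece:
  fixes h :: "'a \<Rightarrow> complex" and s :: real
  assumes sf: "sigma_finite_measure M" and hm[measurable]: "h \<in> borel_measurable M"
    and hb: "AE x in M. cmod (h x) \<le> C"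
    and S[measurable]: "S \<in> sets M" and Spos: "emeasure M S > 0"
    and Sc: "\<And>x. x \<in> S \<Longrightarrow> 0 < Re (c0 * h x) \<and> (s = 0 \<longrightarrow> Im (c0 * h x) = 0) \<and>
                    (s \<noteq> 0 \<longrightarrow> 0 < s * Im (c0 * h x))"
  obtains T where "T \<in> sets M" "T \<subseteq> S" "emeasure M T < \<infinity>"
    "integrable M (\<lambda>x. indicator T x * h x)"
    "0 < Re (c0 * (\<integral>x. indicator T x * h x \<partial>M))"
    "s = 0 \<Longrightarrow> Im (c0 * (\<integral>x. indicator T x * h x \<partial>M)) = 0"
    "s \<noteq> 0 \<Longrightarrow> 0 < s * Im (c0 * (\<integral>x. indicator T x * h x \<partial>M))"
proof -
  define f where "f x = min (Re (c0 * h x)) (if s = 0 then 1 else s * Im (c0 * h x))" for x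
  have fm[measurable]: "f \<in> borel_measurable M" unfolding f_def by measurable
  have fpos: "\<And>x. x \<in> S \<Longrightarrow> f x > 0" using Sc by (auto simp: f_def)
  obtain T \<delta> where T[measurable]: "T \<in> sets M" and TS: "T \<subseteq> S" and Tpos: "emeasure M T > 0"
    and Tfin: "emeasure M T < \<infinity>" and \<delta>: "\<delta> > 0" and Tf: "\<And>x. x \<in> T \<Longrightarrow> \<delta> \<le> f x"
    using refine[OF sf S Spos fm fpos] by metis
  have Tint: "integrable M (\<lambda>x. indicator T x * h x)"
    by (rule indicator_h_int[OF hm hb T Tfin])
  define H where "H = (\<integral>x. indicator T x * h x \<partial>M)"
  have gint: "integrable M (\<lambda>x. c0 * (indicator T x * h x))" using Tint by auto
  have cH: "c0 * H = (\<integral>x. c0 * (indicator T x * h x) \<partial>M)" unfolding H_def by simp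
  have mpos: "measure M T > 0"
    using Tpos Tfin emeasure_eq_ennreal_measure[of M T] by (auto simp: less_top)
  have mT: "(\<integral>x. indicator T x * \<delta> \<partial>M) = \<delta> * measure M T"
    using integrable_real_indicator[OF T Tfin] by (simp add: sets.Int_space_eq2[OF T])
  have lowint: "integrable M (\<lambda>x. indicator T x * \<delta> :: real)"
    using integrable_real_indicator[OF T Tfin] by auto
  have ReH: "Re (c0 * H) = (\<integral>x. Re (c0 * (indicator T x * h x)) \<partial>M)"
    unfolding cH using integral_Re[OF gint] by simp
  have ImH: "Im (c0 * H) = (\<integral>x. Im (c0 * (indicator T x * h x)) \<partial>M)"
    unfolding cH using integral_Im[OF gint] by simp
  have "\<delta> * measure M T \<le> Re (c0 * H)"
    unfolding ReH mT[symmetric]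
    by (rule Bochner_Integration.integral_mono[OF lowint integrable_Re[OF gint]])
       (use Tf in \<open>auto simp: f_def split: split_indicator\<close>)
  then have r1: "0 < Re (c0 * H)" using \<delta> mpos by (smt (verit) mult_pos_pos)
  have r2: "Im (c0 * H) = 0" if "s = 0"
  proof -
    have "(\<integral>x. Im (c0 * (indicator T x * h x)) \<partial>M) = (\<integral>x. 0 \<partial>M)"
      by (rule Bochner_Integration.integral_cong) (use Sc TS that in \<open>auto split: split_indicator\<close>)
    then show ?thesis unfolding ImH by simp
  qed
  have r3: "0 < s * Im (c0 * H)" if "s \<noteq> 0"
  proof -
    have "s * Im (c0 * H) = (\<integral>x. s * Im (c0 * (indicator T x * h x)) \<partial>M)"
      unfolding ImH by simp
    moreover have "\<delta> * measure M T \<le> (\<integral>x. s * Im (c0 * (indicator T x * h x)) \<partial>M)"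
      unfolding mT[symmetric]
      by (rule Bochner_Integration.integral_mono[OF lowint integrable_mult_right[OF integrable_Im[OF gint]]])
         (use Tf that in \<open>auto simp: f_def split: split_indicator\<close>)
    ultimately show ?thesis using \<delta> mpos by (smt (verit) mult_pos_pos)
  qed
  show thesis using that[OF T TS Tfin Tint] r1 r2 r3 unfolding H_def by blast
qed

lemma Hpiece_ex:
  fixes h :: "'a \<Rightarrow> complex" and s :: real
  assumes sf: "sigma_finite_measure M" and hm[measurable]: "h \<in> borel_measurable M"
    and hb: "AE x in M. cmod (h x) \<le> C"
    and S[measurable]: "S \<in> sets M" and Spos: "emeasure M S > 0"
    and Sc: "\<And>x. x \<in> S \<Longrightarrow> 0 < Re (c0 * h x) \<and> (s = 0 \<longrightarrow> Im (c0 * h x) = 0) \<and>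
                    (s \<noteq> 0 \<longrightarrow> 0 < s * Im (c0 * h x))"
  shows "\<exists>T. T \<in> sets M \<and> T \<subseteq> S \<and> emeasure M T < \<infinity> \<and>
    integrable M (\<lambda>x. indicator T x * h x) \<and>
    0 < Re (c0 * (\<integral>x. indicator T x * h x \<partial>M)) \<and>
    (s = 0 \<longrightarrow> Im (c0 * (\<integral>x. indicator T x * h x \<partial>M)) = 0) \<and>
    (s \<noteq> 0 \<longrightarrow> 0 < s * Im (c0 * (\<integral>x. indicator T x * h x \<partial>M)))"
proof (rule Hpiece[OF sf hm hb S Spos Sc])
  fix T assume "T \<in> sets M" "T \<subseteq> S" "emeasure M T < \<infinity>"
    "integrable M (\<lambda>x. indicator T x * h x)"
    "0 < Re (c0 * (\<integral>x. indicator T x * h x \<partial>M))"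
    "s = 0 \<Longrightarrow> Im (c0 * (\<integral>x. indicator T x * h x \<partial>M)) = 0"
    "s \<noteq> 0 \<Longrightarrow> 0 < s * Im (c0 * (\<integral>x. indicator T x * h x \<partial>M))"
  then show ?thesis by blast
qed

lemma Gpair:
  fixes h :: "'a \<Rightarrow> complex"
  assumes T1[measurable]: "T1 \<in> sets M" and T2[measurable]: "T2 \<in> sets M"
    and f1: "emeasure M T1 < \<infinity>" and f2: "emeasure M T2 < \<infinity>"
    and Y1: "T1 \<inter> Y = {}" and Y2: "T2 \<inter> Y = {}"
    and i1: "integrable M (\<lambda>x. indicator T1 x * h x)" and i2: "integrable M (\<lambda>x. indicator T2 x * h x)"
    and a1: "a1 \<ge> 0" and a2: "a2 \<ge> 0"
  defines "G \<equiv> (\<lambda>x. a1 * indicator T1 x + a2 * indicator T2 x :: real)"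
  shows "G \<in> borel_measurable M" "\<And>x. G x \<ge> 0" "\<And>x. x \<in> Y \<Longrightarrow> G x = 0" "integrable M G"
    "(\<integral>x. complex_of_real (G x) * h x \<partial>M) =
       complex_of_real a1 * (\<integral>x. indicator T1 x * h x \<partial>M) + complex_of_real a2 * (\<integral>x. indicator T2 x * h x \<partial>M)"
proof -
  show "G \<in> borel_measurable M" unfolding G_def by measurable
  show "\<And>x. G x \<ge> 0" unfolding G_def using a1 a2 by (auto split: split_indicator)
  show "\<And>x. x \<in> Y \<Longrightarrow> G x = 0" unfolding G_def using Y1 Y2 by (auto split: split_indicator)
  show "integrable M G" unfolding G_def
    using integrable_real_indicator[OF T1 f1] integrable_real_indicator[OF T2 f2] by auto
  have "(\<integral>x. complex_of_real (G x) * h x \<partial>M) =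
     (\<integral>x. complex_of_real a1 * (indicator T1 x * h x) + complex_of_real a2 * (indicator T2 x * h x) \<partial>M)"
    by (rule Bochner_Integration.integral_cong) (auto simp: G_def distrib_right split: split_indicator)
  also have "\<dots> = complex_of_real a1 * (\<integral>x. indicator T1 x * h x \<partial>M) + complex_of_real a2 * (\<integral>x. indicator T2 x * h x \<partial>M)"
    using i1 i2 by simp
  finally show "(\<integral>x. complex_of_real (G x) * h x \<partial>M) =
       complex_of_real a1 * (\<integral>x. indicator T1 x * h x \<partial>M) + complex_of_real a2 * (\<integral>x. indicator T2 x * h x \<partial>M)" .
qed

lemma qint:
  fixes h :: "'a \<Rightarrow> complex" and P :: "'a \<Rightarrow> complex^'n::finite"
  assumes hm[measurable]: "h \<in> borel_measurable M" and hb: "AE x in M. cmod (h x) \<le> C"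
    and Pm[measurable]: "\<And>k. (\<lambda>x. P x $ k) \<in> borel_measurable M"
    and Pint: "integrable M (\<lambda>x. (norm (P x))\<^sup>2)"
  shows "integrable M (\<lambda>x. h x * cinner_n b (P x) * P x $ k)"
proof (rule Bochner_Integration.integrable_bound[where f = "\<lambda>x. (max C 0 * (real CARD('n) * norm b)) * (norm (P x))\<^sup>2"])
  show "integrable M (\<lambda>x. (max C 0 * (real CARD('n) * norm b)) * (norm (P x))\<^sup>2)"
    using Pint by auto
  show "(\<lambda>x. h x * cinner_n b (P x) * P x $ k) \<in> borel_measurable M"
    using cinner_meas[OF Pm] by measurable
  show "AE x in M. norm (h x * cinner_n b (P x) * P x $ k)
     \<le> norm ((max C 0 * (real CARD('n) * norm b)) * (norm (P x))\<^sup>2)"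
    using hb
  proof eventually_elim
    case (elim x)
    have "norm (h x * cinner_n b (P x) * P x $ k) = cmod (h x) * cmod (cinner_n b (P x)) * cmod (P x $ k)"
      by (simp add: norm_mult)
    also have "\<dots> \<le> max C 0 * (real CARD('n) * norm b * norm (P x)) * norm (P x)"
      by (intro mult_mono cinner_bound Finite_Cartesian_Product.norm_nth_le) (use elim in auto)
    also have "\<dots> = norm ((max C 0 * (real CARD('n) * norm b)) * (norm (P x))\<^sup>2)"
      by (simp add: power2_eq_square abs_mult)
    finally show ?case .
  qed
qed


lemma frameY_ex:
  fixes M :: "'a measure"
  assumes Y: "Y \<in> sets M" and L: "L2_dim_ge M Y TYPE('n::finite)"
  shows "\<exists>(P :: 'a \<Rightarrow> complex^'n) A. (\<forall>k. (\<lambda>x. P x $ k) \<in> borel_measurable M) \<and> (\<forall>x. x \<notin> Y \<longrightarrow> P x = 0) \<and>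
     integrable M (\<lambda>x. (norm (P x))\<^sup>2) \<and> A > 0 \<and>
     (\<forall>v. ennreal (A * (norm v)\<^sup>2) \<le> (\<integral>\<^sup>+ x. ennreal ((cmod (cinner_n v (P x)))\<^sup>2) \<partial>M))"
proof (rule frameY[OF Y L])
  fix P :: "'a \<Rightarrow> complex^'n" and A :: real
  assume "\<And>k. (\<lambda>x. P x $ k) \<in> borel_measurable M" "\<And>x. x \<notin> Y \<Longrightarrow> P x = 0"
    "integrable M (\<lambda>x. (norm (P x))\<^sup>2)" "A > 0"
    "\<And>v. ennreal (A * (norm v)\<^sup>2) \<le> (\<integral>\<^sup>+ x. ennreal ((cmod (cinner_n v (P x)))\<^sup>2) \<partial>M)"
  then show ?thesis by blast
qed

lemma cscale: "r *\<^sub>R (z::complex) = complex_of_real r * z"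
  by (simp add: scaleR_conv_of_real)

lemma assemble:
  fixes M :: "'a measure" and h :: "'a \<Rightarrow> complex" and P :: "'a \<Rightarrow> complex^'n::finite"
    and G :: "'a \<Rightarrow> real"
  assumes hm[measurable]: "h \<in> borel_measurable M" and hb: "AE x in M. cmod (h x) \<le> C"
    and Pm[measurable]: "\<And>k. (\<lambda>x. P x $ k) \<in> borel_measurable M"
    and P0: "\<And>x. x \<notin> Y \<Longrightarrow> P x = 0"
    and Pint: "integrable M (\<lambda>x. (norm (P x))\<^sup>2)"
    and A0: "A > 0"
    and PA: "\<And>v. ennreal (A * (norm v)\<^sup>2) \<le> (\<integral>\<^sup>+ x. ennreal ((cmod (cinner_n v (P x)))\<^sup>2) \<partial>M)"
    and Gm[measurable]: "G \<in> borel_measurable M" and G0: "\<And>x. G x \<ge> 0"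
    and GY: "\<And>x. x \<in> Y \<Longrightarrow> G x = 0"
    and Gint: "integrable M G" and t: "t > 0"
  shows "cont_frame M (\<lambda>x. t *\<^sub>R P x + sqrt (G x) *\<^sub>R w) \<and>
     q_map M h b (\<lambda>x. t *\<^sub>R P x + sqrt (G x) *\<^sub>R w) =
     (\<chi> k. complex_of_real (t\<^sup>2) * q_map M h b P $ k
            + cinner_n b w * (\<integral>x. complex_of_real (G x) * h x \<partial>M) * w$k)"
proof -
  define \<Phi> where "\<Phi> x = t *\<^sub>R P x + sqrt (G x) *\<^sub>R w" for x
  have \<Phi>eq: "\<Phi> = (\<lambda>x. t *\<^sub>R P x + sqrt (G x) *\<^sub>R w)" by (rule ext) (simp add: \<Phi>_def)
  have \<Phi>k: "\<Phi> x $ k = complex_of_real t * P x $ k + complex_of_real (sqrt (G x)) * w $ k" for x k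
    unfolding \<Phi>_def vector_add_component vector_scaleR_component cscale ..
  have \<Phi>m[measurable]: "(\<lambda>x. \<Phi> x $ k) \<in> borel_measurable M" for k unfolding \<Phi>k by measurable
  have \<Phi>Y: "x \<in> Y \<Longrightarrow> \<Phi> x = t *\<^sub>R P x" for x using GY by (simp add: \<Phi>_def)
  have \<Phi>nY: "x \<notin> Y \<Longrightarrow> \<Phi> x = sqrt (G x) *\<^sub>R w" for x using P0 by (simp add: \<Phi>_def)
  have n\<Phi>: "(norm (\<Phi> x))\<^sup>2 = t\<^sup>2 * (norm (P x))\<^sup>2 + G x * (norm w)\<^sup>2" for x
  proof (cases "x \<in> Y")
    case True then show ?thesis using GY \<Phi>Y by (simp add: power_mult_distrib)
  next
    case False then show ?thesis using P0 \<Phi>nY G0[of x] by (simp add: power_mult_distrib)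
  qed
  have \<Phi>int: "integrable M (\<lambda>x. (norm (\<Phi> x))\<^sup>2)" unfolding n\<Phi> using Pint Gint by auto
  have \<Phi>nm[measurable]: "(\<lambda>x. (norm (\<Phi> x))\<^sup>2) \<in> borel_measurable M" by (rule normsq_meas[OF \<Phi>m])
  define I where "I = (\<integral>x. (norm (\<Phi> x))\<^sup>2 \<partial>M)"
  have I0: "I \<ge> 0" unfolding I_def by (rule Bochner_Integration.integral_nonneg) simp
  have Inn: "(\<integral>\<^sup>+ x. ennreal ((norm (\<Phi> x))\<^sup>2) \<partial>M) = ennreal I"
    unfolding I_def by (rule nn_integral_eq_integral[OF \<Phi>int]) simp
  have lower: "ennreal (t\<^sup>2 * A * (norm v)\<^sup>2) \<le> (\<integral>\<^sup>+ x. ennreal ((cmod (cinner_n v (\<Phi> x)))\<^sup>2) \<partial>M)" for v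
  proof -
    have mm: "(\<lambda>x. ennreal ((cmod (cinner_n v (P x)))\<^sup>2)) \<in> borel_measurable M"
      using cinner_meas[OF Pm] by measurable
    have "ennreal (t\<^sup>2 * A * (norm v)\<^sup>2) = ennreal (t\<^sup>2) * ennreal (A * (norm v)\<^sup>2)"
      using A0 by (simp add: ennreal_mult[symmetric] mult.assoc)
    also have "\<dots> \<le> ennreal (t\<^sup>2) * (\<integral>\<^sup>+ x. ennreal ((cmod (cinner_n v (P x)))\<^sup>2) \<partial>M)"
      by (rule mult_left_mono[OF PA]) simp
    also have "\<dots> = (\<integral>\<^sup>+ x. ennreal (t\<^sup>2) * ennreal ((cmod (cinner_n v (P x)))\<^sup>2) \<partial>M)"
      by (rule nn_integral_cmult[OF mm, symmetric])
    also have "\<dots> \<le> (\<integral>\<^sup>+ x. ennreal ((cmod (cinner_n v (\<Phi> x)))\<^sup>2) \<partial>M)"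
    proof (rule nn_integral_mono)
      fix x
      show "ennreal (t\<^sup>2) * ennreal ((cmod (cinner_n v (P x)))\<^sup>2) \<le> ennreal ((cmod (cinner_n v (\<Phi> x)))\<^sup>2)"
      proof (cases "x \<in> Y")
        case True
        have "cinner_n v (\<Phi> x) = complex_of_real t * cinner_n v (P x)"
          using \<Phi>Y[OF True] by (simp add: cinner_scaleR_right)
        then have "(cmod (cinner_n v (\<Phi> x)))\<^sup>2 = t\<^sup>2 * (cmod (cinner_n v (P x)))\<^sup>2"
          by (simp add: norm_mult power_mult_distrib)
        then show ?thesis by (simp add: ennreal_mult[symmetric])
      next
        case False then show ?thesis using P0 by simp
      qed
    qed
    finally show ?thesis .
  qed
  have upper: "(\<integral>\<^sup>+ x. ennreal ((cmod (cinner_n v (\<Phi> x)))\<^sup>2) \<partial>M)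
      \<le> ennreal ((t\<^sup>2 * A + (real CARD('n))\<^sup>2 * I) * (norm v)\<^sup>2)" for v
  proof -
    have mm: "(\<lambda>x. ennreal ((norm (\<Phi> x))\<^sup>2)) \<in> borel_measurable M" by measurable
    have "(\<integral>\<^sup>+ x. ennreal ((cmod (cinner_n v (\<Phi> x)))\<^sup>2) \<partial>M)
        \<le> (\<integral>\<^sup>+ x. ennreal ((real CARD('n) * norm v)\<^sup>2) * ennreal ((norm (\<Phi> x))\<^sup>2) \<partial>M)"
      by (rule nn_integral_mono) (simp add: ennreal_mult[symmetric] cinner_sq_bound)
    also have "\<dots> = ennreal ((real CARD('n) * norm v)\<^sup>2) * ennreal I"
      using nn_integral_cmult[OF mm] Inn by simp
    also have "\<dots> = ennreal ((real CARD('n))\<^sup>2 * I * (norm v)\<^sup>2)"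
      using I0 by (simp add: ennreal_mult[symmetric] power_mult_distrib mult_ac)
    also have "\<dots> \<le> ennreal ((t\<^sup>2 * A + (real CARD('n))\<^sup>2 * I) * (norm v)\<^sup>2)"
      using A0 by (intro ennreal_leI mult_right_mono) auto
    finally show ?thesis .
  qed
  have frame: "cont_frame M \<Phi>"
    unfolding cont_frame_def
  proof (intro conjI)
    show "\<forall>k. (\<lambda>x. \<Phi> x $ k) \<in> borel_measurable M" by simp
    show "(\<integral>\<^sup>+ x. ennreal ((norm (\<Phi> x))\<^sup>2) \<partial>M) < \<infinity>" unfolding Inn by simp
    show "\<exists>A B. 0 < A \<and> A \<le> B \<and>
        (\<forall>v. ennreal (A * (norm v)\<^sup>2) \<le> (\<integral>\<^sup>+ x. ennreal ((cmod (cinner_n v (\<Phi> x)))\<^sup>2) \<partial>M)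
           \<and> (\<integral>\<^sup>+ x. ennreal ((cmod (cinner_n v (\<Phi> x)))\<^sup>2) \<partial>M) \<le> ennreal (B * (norm v)\<^sup>2))"
      apply (rule exI[of _ "t\<^sup>2 * A"], rule exI[of _ "t\<^sup>2 * A + (real CARD('n))\<^sup>2 * I"])
      using lower upper A0 t I0 by auto
  qed
  have Cint1: "integrable M (\<lambda>x. h x * cinner_n b (P x) * P x $ k)" for k
    by (rule qint[OF hm hb Pm Pint])
  have Cint2: "integrable M (\<lambda>x. complex_of_real (G x) * h x)"
  proof (rule Bochner_Integration.integrable_bound[where f = "\<lambda>x. max C 0 * G x"])
    show "integrable M (\<lambda>x. max C 0 * G x)" using Gint by auto
    show "(\<lambda>x. complex_of_real (G x) * h x) \<in> borel_measurable M" by measurable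
    show "AE x in M. norm (complex_of_real (G x) * h x) \<le> norm (max C 0 * G x)"
      using hb
    proof eventually_elim
      case (elim x)
      have "norm (complex_of_real (G x) * h x) = G x * cmod (h x)" using G0[of x] by (simp add: norm_mult)
      also have "\<dots> \<le> G x * max C 0" using elim G0[of x] by (intro mult_left_mono) auto
      also have "\<dots> = norm (max C 0 * G x)" using G0[of x] by (simp add: abs_mult mult.commute)
      finally show ?case .
    qed
  qed
  have pt: "h x * cinner_n b (\<Phi> x) * \<Phi> x $ k =
      complex_of_real (t\<^sup>2) * (h x * cinner_n b (P x) * P x $ k)
      + cinner_n b w * w$k * (complex_of_real (G x) * h x)" for x k
  proof (cases "x \<in> Y")
    case True
    have c1: "cinner_n b (\<Phi> x) = complex_of_real t * cinner_n b (P x)"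
      using \<Phi>Y[OF True] by (simp add: cinner_scaleR_right)
    have c2: "\<Phi> x $ k = complex_of_real t * P x $ k" using \<Phi>k[of x k] GY[OF True] by simp
    show ?thesis using GY[OF True] by (simp add: c1 c2 power2_eq_square algebra_simps)
  next
    case False
    have c1: "cinner_n b (\<Phi> x) = complex_of_real (sqrt (G x)) * cinner_n b w"
      using \<Phi>nY[OF False] by (simp add: cinner_scaleR_right)
    have c2: "\<Phi> x $ k = complex_of_real (sqrt (G x)) * w $ k" using \<Phi>k[of x k] P0[OF False] by simp
    have c3: "complex_of_real (sqrt (G x)) * complex_of_real (sqrt (G x)) = complex_of_real (G x)"
      using G0[of x] by (metis of_real_mult real_sqrt_mult_self abs_of_nonneg)
    have "h x * cinner_n b (\<Phi> x) * \<Phi> x $ k =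
        (complex_of_real (sqrt (G x)) * complex_of_real (sqrt (G x))) * (h x * cinner_n b w * w$k)"
      by (simp add: c1 c2 mult_ac)
    then show ?thesis using P0[OF False] by (simp add: c3 mult_ac)
  qed
  have qk: "(\<integral>x. h x * cinner_n b (\<Phi> x) * \<Phi> x $ k \<partial>M) =
      complex_of_real (t\<^sup>2) * (\<integral>x. h x * cinner_n b (P x) * P x $ k \<partial>M)
      + cinner_n b w * w$k * (\<integral>x. complex_of_real (G x) * h x \<partial>M)" for k
    unfolding pt using Cint1[of k] Cint2 by simp
  have q: "q_map M h b \<Phi> = (\<chi> k. complex_of_real (t\<^sup>2) * q_map M h b P $ k
            + cinner_n b w * (\<integral>x. complex_of_real (G x) * h x \<partial>M) * w$k)"
    unfolding q_map_def vec_eq_iff vec_lambda_beta qk by (simp add: mult_ac)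
  show ?thesis using frame q unfolding \<Phi>eq by simp
qed

lemma perturb:
  fixes c \<beta> H :: complex and \<tau> m :: real
  assumes "0 \<le> \<tau>" "\<tau> * (cmod \<beta> * cmod H) < m"
  shows "\<bar>Re ((c - complex_of_real \<tau> * \<beta>) * H) - Re (c * H)\<bar> < m"
    "\<bar>Im ((c - complex_of_real \<tau> * \<beta>) * H) - Im (c * H)\<bar> < m"
proof -
  have e: "(c - complex_of_real \<tau> * \<beta>) * H = c * H - complex_of_real \<tau> * \<beta> * H"
    by (simp add: algebra_simps)
  have n: "cmod (complex_of_real \<tau> * \<beta> * H) = \<tau> * (cmod \<beta> * cmod H)"
    using assms(1) by (simp add: norm_mult)
  show "\<bar>Re ((c - complex_of_real \<tau> * \<beta>) * H) - Re (c * H)\<bar> < m"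
    using abs_Re_le_cmod[of "complex_of_real \<tau> * \<beta> * H"] n assms(2) unfolding e by simp
  show "\<bar>Im ((c - complex_of_real \<tau> * \<beta>) * H) - Im (c * H)\<bar> < m"
    using abs_Im_le_cmod[of "complex_of_real \<tau> * \<beta> * H"] n assms(2) unfolding e by simp
qed

lemma finish:
  fixes e d' :: "complex^'n::finite"
  assumes ci: "cinner_n b d' = c'" and cK: "c' * K = complex_of_real \<kappa>" and k0: "\<kappa> > 0"
  shows "(\<chi> k. complex_of_real \<tau> * e$k + cinner_n b ((1 / sqrt \<kappa>) *\<^sub>R d') * K * ((1 / sqrt \<kappa>) *\<^sub>R d')$k)
     = \<tau> *\<^sub>R e + d'"
proof -
  define s where "s = 1 / sqrt \<kappa>"
  have sq: "sqrt \<kappa> > 0" using k0 by simp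
  have "sqrt \<kappa> * sqrt \<kappa> = \<kappa>" using k0 by simp
  then have "s * s * \<kappa> = 1" using sq by (simp add: s_def field_simps)
  then have ss: "complex_of_real s * complex_of_real s * complex_of_real \<kappa> = 1"
    by (metis of_real_mult of_real_1)
  have cw: "cinner_n b (s *\<^sub>R d') = complex_of_real s * c'" using ci by (simp add: cinner_scaleR_right)
  show ?thesis unfolding s_def[symmetric]
  proof (rule iffD2[OF vec_eq_iff], intro allI)
    fix k
    have "complex_of_real s * c' * K * (complex_of_real s * d'$k)
        = (complex_of_real s * complex_of_real s * (c' * K)) * d'$k" by (simp add: mult_ac)
    also have "\<dots> = d'$k" using ss cK by simp
    finally show "(\<chi> k. complex_of_real \<tau> * e$k + cinner_n b (s *\<^sub>R d') * K * (s *\<^sub>R d')$k) $ k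
        = (\<tau> *\<^sub>R e + d') $ k"
      using cw by (simp add: cscale)
  qed
qed

theorem proposition5p11:
  fixes M :: "'a measure" and h :: "'a \<Rightarrow> complex"
    and b d :: "complex ^ 'n::finite" and \<epsilon> :: real
  assumes "sigma_finite_measure M"
    and "b \<noteq> 0" and "\<epsilon> > 0"
    and "Linf_fun M h"
    and "d \<noteq> 0 \<Longrightarrow> (\<exists>Y B1 B2. Y \<in> sets M \<and> L2_dim_ge M Y TYPE('n) \<and>
            B1 \<in> sets borel \<and> B2 \<in> sets borel \<and>
            B1 \<subseteq> {z. Re (cinner_n b d * z) > \<epsilon> \<and> Im (cinner_n b d * z) < - \<epsilon>} \<and>
            B2 \<subseteq> {z. Re (cinner_n b d * z) > \<epsilon> \<and> Im (cinner_n b d * z) > \<epsilon>} \<and>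
            emeasure M ((space M - Y) \<inter> (h -` B1 \<inter> space M)) > 0 \<and>
            emeasure M ((space M - Y) \<inter> (h -` B2 \<inter> space M)) > 0)"
    and "d = 0 \<Longrightarrow> (\<exists>Y. Y \<in> sets M \<and> L2_dim_ge M Y TYPE('n) \<and>
            (AE x in M. x \<in> Y \<longrightarrow> h x \<in> \<real> \<and> Re (h x) < 0) \<and>
            ((\<exists>B1 B2. B1 \<in> sets borel \<and> B2 \<in> sets borel \<and>
                B1 \<subseteq> {z. Re z > 0 \<and> Im z < 0} \<and> B2 \<subseteq> {z. Re z > 0 \<and> Im z > 0} \<and>
                emeasure M ((space M - Y) \<inter> (h -` B1 \<inter> space M)) > 0 \<and>
                emeasure M ((space M - Y) \<inter> (h -` B2 \<inter> space M)) > 0) \<or>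
             (\<exists>B3. B3 \<in> sets borel \<and> B3 \<subseteq> {z. Re z > 0 \<and> Im z = 0} \<and>
                emeasure M ((space M - Y) \<inter> (h -` B3 \<inter> space M)) > 0)))"
  shows "\<exists>\<Phi> :: 'a \<Rightarrow> complex ^ 'n. cont_frame M \<Phi> \<and> q_map M h b \<Phi> = d"
proof -
  have sf: "sigma_finite_measure M" by (rule assms(1))
  obtain C where hm[measurable]: "h \<in> borel_measurable M" and hb: "AE x in M. cmod (h x) \<le> C"
    using assms(4) unfolding Linf_fun_def by blast
  have Sset: "(space M - Y) \<inter> (h -` B \<inter> space M) \<in> sets M" if "Y \<in> sets M" "B \<in> sets borel" for Y B
    by (intro sets.Int sets.Diff sets.top that measurable_sets[OF hm])
  show ?thesis
  proof (cases "d = 0")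
    case True
    obtain Y where Y[measurable]: "Y \<in> sets M" and L: "L2_dim_ge M Y TYPE('n)"
      and hY: "AE x in M. x \<in> Y \<longrightarrow> h x \<in> \<real> \<and> Re (h x) < 0"
      and alt: "(\<exists>B1 B2. B1 \<in> sets borel \<and> B2 \<in> sets borel \<and>
                B1 \<subseteq> {z. Re z > 0 \<and> Im z < 0} \<and> B2 \<subseteq> {z. Re z > 0 \<and> Im z > 0} \<and>
                emeasure M ((space M - Y) \<inter> (h -` B1 \<inter> space M)) > 0 \<and>
                emeasure M ((space M - Y) \<inter> (h -` B2 \<inter> space M)) > 0) \<or>
             (\<exists>B3. B3 \<in> sets borel \<and> B3 \<subseteq> {z. Re z > 0 \<and> Im z = 0} \<and>
                emeasure M ((space M - Y) \<inter> (h -` B3 \<inter> space M)) > 0)"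
      using assms(6)[OF True] by blast
    obtain P :: "'a \<Rightarrow> complex^'n" and A where
      Pm: "\<And>k. (\<lambda>x. P x $ k) \<in> borel_measurable M" and
      P0: "\<And>x. x \<notin> Y \<Longrightarrow> P x = 0" and
      Pint: "integrable M (\<lambda>x. (norm (P x))\<^sup>2)" and
      A0: "A > 0" and
      PA: "\<And>v. ennreal (A * (norm v)\<^sup>2) \<le> (\<integral>\<^sup>+ x. ennreal ((cmod (cinner_n v (P x)))\<^sup>2) \<partial>M)"
    proof -
      obtain P :: "'a \<Rightarrow> complex^'n" and A :: real where
        PP: "(\<forall>k. (\<lambda>x. P x $ k) \<in> borel_measurable M) \<and> (\<forall>x. x \<notin> Y \<longrightarrow> P x = 0) \<and>
         integrable M (\<lambda>x. (norm (P x))\<^sup>2) \<and> A > 0 \<and>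
         (\<forall>v. ennreal (A * (norm v)\<^sup>2) \<le> (\<integral>\<^sup>+ x. ennreal ((cmod (cinner_n v (P x)))\<^sup>2) \<partial>M))"
        using frameY_ex[OF Y L] by blast
      show thesis by (rule that[of P A]) (use PP in blast)+
    qed
    have [measurable]: "(\<lambda>x. P x $ k) \<in> borel_measurable M" for k by (rule Pm)
    have cPm[measurable]: "(\<lambda>x. cinner_n v (P x)) \<in> borel_measurable M" for v by (rule cinner_meas[OF Pm])
    define e where "e = q_map M h b P"
    define W where "W x = (cmod (cinner_n b (P x)))\<^sup>2" for x
    have Wm[measurable]: "W \<in> borel_measurable M" unfolding W_def by measurable
    have W0: "W x \<ge> 0" for x by (simp add: W_def)
    have Wint: "integrable M (\<lambda>x. Re (h x) * W x)"
    proof (rule Bochner_Integration.integrable_bound[where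
          f = "\<lambda>x. (max C 0 * (real CARD('n) * norm b)\<^sup>2) * (norm (P x))\<^sup>2"])
      show "integrable M (\<lambda>x. (max C 0 * (real CARD('n) * norm b)\<^sup>2) * (norm (P x))\<^sup>2)"
        using Pint by auto
      show "(\<lambda>x. Re (h x) * W x) \<in> borel_measurable M" by measurable
      show "AE x in M. norm (Re (h x) * W x) \<le> norm ((max C 0 * (real CARD('n) * norm b)\<^sup>2) * (norm (P x))\<^sup>2)"
        using hb
      proof eventually_elim
        case (elim x)
        have "norm (Re (h x) * W x) = \<bar>Re (h x)\<bar> * W x" using W0[of x] by (simp add: abs_mult)
        also have "\<dots> \<le> max C 0 * ((real CARD('n) * norm b)\<^sup>2 * (norm (P x))\<^sup>2)"
          using elim abs_Re_le_cmod[of "h x"] W0[of x] cinner_sq_bound[of b "P x"] unfolding W_def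
          by (intro mult_mono) auto
        also have "\<dots> = norm ((max C 0 * (real CARD('n) * norm b)\<^sup>2) * (norm (P x))\<^sup>2)"
          by (simp add: abs_mult mult_ac)
        finally show ?case .
      qed
    qed
    have be: "cinner_n b e = complex_of_real (\<integral>x. Re (h x) * W x \<partial>M)"
    proof -
      have "cinner_n b e = (\<Sum>k\<in>UNIV. b$k * cnj (\<integral>x. h x * cinner_n b (P x) * P x $ k \<partial>M))"
        by (simp add: cinner_n_def e_def q_map_def)
      also have "\<dots> = (\<Sum>k\<in>UNIV. \<integral>x. b$k * cnj (h x * cinner_n b (P x) * P x $ k) \<partial>M)"
        by (simp only: Bochner_Integration.integral_cnj integral_mult_right_zero)
      also have "\<dots> = (\<integral>x. (\<Sum>k\<in>UNIV. b$k * cnj (h x * cinner_n b (P x) * P x $ k)) \<partial>M)"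
        by (rule Bochner_Integration.integral_sum[symmetric])
           (intro integrable_mult_right integrable_cnj qint[OF hm hb Pm Pint])
      also have "\<dots> = (\<integral>x. complex_of_real (Re (h x) * W x) \<partial>M)"
      proof (rule integral_cong_AE)
        show "(\<lambda>x. \<Sum>k\<in>UNIV. b$k * cnj (h x * cinner_n b (P x) * P x $ k)) \<in> borel_measurable M"
          by measurable
        show "(\<lambda>x. complex_of_real (Re (h x) * W x)) \<in> borel_measurable M" by measurable
        show "AE x in M. (\<Sum>k\<in>UNIV. b$k * cnj (h x * cinner_n b (P x) * P x $ k))
            = complex_of_real (Re (h x) * W x)"
          using hY
        proof eventually_elim
          case (elim x)
          define c where "c = cinner_n b (P x)"
          have s1: "(\<Sum>k\<in>UNIV. b$k * cnj (h x * c * P x $ k))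
              = cnj (h x) * cnj c * (\<Sum>k\<in>UNIV. b$k * cnj (P x $ k))"
            by (simp add: sum_distrib_left mult_ac)
          have s1': "(\<Sum>k\<in>UNIV. b$k * cnj (P x $ k)) = c" unfolding c_def cinner_n_def ..
          have s2: "cnj c * c = complex_of_real (W x)"
            unfolding W_def c_def complex_norm_square by (simp add: mult.commute)
          show ?case
          proof (cases "x \<in> Y")
            case True
            then have "cnj (h x) = complex_of_real (Re (h x))"
              using elim by (simp add: complex_eq_iff complex_is_Real_iff)
            then show ?thesis using s1 s1' s2 unfolding c_def by (simp add: mult.assoc)
          next
            case False then show ?thesis using P0[OF False] by (simp add: W_def)
          qed
        qed
      qed
      also have "\<dots> = complex_of_real (\<integral>x. Re (h x) * W x \<partial>M)" using Wint by (rule integral_of_real)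
      finally show ?thesis .
    qed
    have nonneg: "AE x in M. 0 \<le> - Re (h x) * W x"
      using hY
    proof eventually_elim
      case (elim x)
      show ?case
      proof (cases "x \<in> Y")
        case True then show ?thesis using elim W0[of x] mult_nonpos_nonneg[of "Re (h x)" "W x"] by simp
      next
        case False then show ?thesis using P0[OF False] by (simp add: W_def)
      qed
    qed
    have Wint': "integrable M (\<lambda>x. - Re (h x) * W x)" using Wint by simp
    have rneg: "(\<integral>x. Re (h x) * W x \<partial>M) < 0"
    proof -
      have ne: "(\<integral>x. - Re (h x) * W x \<partial>M) \<noteq> 0"
      proof
        assume "(\<integral>x. - Re (h x) * W x \<partial>M) = 0"
        then have "AE x in M. - Re (h x) * W x = 0"
          using integral_nonneg_eq_0_iff_AE[OF Wint' nonneg] by simp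
        then have AW: "AE x in M. ennreal (W x) = 0"
          using hY
        proof eventually_elim
          case (elim x)
          show ?case
          proof (cases "x \<in> Y")
            case True then show ?thesis using elim by simp
          next
            case False then show ?thesis using P0[OF False] by (simp add: W_def)
          qed
        qed
        have "(\<integral>\<^sup>+x. ennreal (W x) \<partial>M) = (\<integral>\<^sup>+x. 0 \<partial>M)"
          by (rule nn_integral_cong_AE) (use AW in simp)
        then have "(\<integral>\<^sup>+x. ennreal (W x) \<partial>M) = 0" by simp
        moreover have "ennreal (A * (norm b)\<^sup>2) \<le> (\<integral>\<^sup>+x. ennreal (W x) \<partial>M)"
          using PA[of b] unfolding W_def by simp
        ultimately show False using A0 assms(2) by simp
      qed
      moreover have "(\<integral>x. - Re (h x) * W x \<partial>M) \<ge> 0"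
        by (rule integral_nonneg_AE[OF nonneg])
      ultimately have "(\<integral>x. - Re (h x) * W x \<partial>M) > 0" by simp
      then show ?thesis by simp
    qed
    define \<rho> where "\<rho> = - (\<integral>x. Re (h x) * W x \<partial>M)"
    have \<rho>0: "\<rho> > 0" using rneg \<rho>_def by simp
    have c': "cinner_n b (- e) = complex_of_real \<rho>" using be by (simp add: cinner_minus_right \<rho>_def)
    obtain G \<kappa> where Gm: "G \<in> borel_measurable M" and G0: "\<And>x. G x \<ge> 0"
      and GY: "\<And>x. x \<in> Y \<Longrightarrow> G x = 0" and Gint: "integrable M G" and \<kappa>0: "\<kappa> > 0"
      and GK: "(\<integral>x. complex_of_real (G x) * h x \<partial>M) = complex_of_real \<kappa>"
    proof -
      from alt show thesis
      proof
        assume "\<exists>B1 B2. B1 \<in> sets borel \<and> B2 \<in> sets borel \<and>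
                B1 \<subseteq> {z. Re z > 0 \<and> Im z < 0} \<and> B2 \<subseteq> {z. Re z > 0 \<and> Im z > 0} \<and>
                emeasure M ((space M - Y) \<inter> (h -` B1 \<inter> space M)) > 0 \<and>
                emeasure M ((space M - Y) \<inter> (h -` B2 \<inter> space M)) > 0"
        then obtain B1 B2 where B1: "B1 \<in> sets borel" and B2: "B2 \<in> sets borel"
          and B1s: "B1 \<subseteq> {z. Re z > 0 \<and> Im z < 0}" and B2s: "B2 \<subseteq> {z. Re z > 0 \<and> Im z > 0}"
          and p1: "emeasure M ((space M - Y) \<inter> (h -` B1 \<inter> space M)) > 0"
          and p2: "emeasure M ((space M - Y) \<inter> (h -` B2 \<inter> space M)) > 0" by blast
        define S1 where "S1 = (space M - Y) \<inter> (h -` B1 \<inter> space M)"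
        define S2 where "S2 = (space M - Y) \<inter> (h -` B2 \<inter> space M)"
        have S1m: "S1 \<in> sets M" unfolding S1_def by (rule Sset[OF Y B1])
        have S2m: "S2 \<in> sets M" unfolding S2_def by (rule Sset[OF Y B2])
        have S1c: "\<And>x. x \<in> S1 \<Longrightarrow> 0 < Re (1 * h x) \<and> ((-1::real) = 0 \<longrightarrow> Im (1 * h x) = 0) \<and>
                    ((-1::real) \<noteq> 0 \<longrightarrow> 0 < (-1) * Im (1 * h x))"
          using B1s unfolding S1_def by auto
        have S2c: "\<And>x. x \<in> S2 \<Longrightarrow> 0 < Re (1 * h x) \<and> ((1::real) = 0 \<longrightarrow> Im (1 * h x) = 0) \<and>
                    ((1::real) \<noteq> 0 \<longrightarrow> 0 < 1 * Im (1 * h x))"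
          using B2s unfolding S2_def by auto
        obtain T1 where T1: "T1 \<in> sets M" "T1 \<subseteq> S1" "emeasure M T1 < \<infinity>"
          "integrable M (\<lambda>x. indicator T1 x * h x)"
          "0 < Re (1 * (\<integral>x. indicator T1 x * h x \<partial>M))"
          "(-1::real) = 0 \<longrightarrow> Im (1 * (\<integral>x. indicator T1 x * h x \<partial>M)) = 0"
          "(-1::real) \<noteq> 0 \<longrightarrow> 0 < (-1) * Im (1 * (\<integral>x. indicator T1 x * h x \<partial>M))"
          using Hpiece_ex[OF sf hm hb S1m p1[folded S1_def] S1c] by blast
        obtain T2 where T2: "T2 \<in> sets M" "T2 \<subseteq> S2" "emeasure M T2 < \<infinity>"
          "integrable M (\<lambda>x. indicator T2 x * h x)"
          "0 < Re (1 * (\<integral>x. indicator T2 x * h x \<partial>M))"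
          "(1::real) = 0 \<longrightarrow> Im (1 * (\<integral>x. indicator T2 x * h x \<partial>M)) = 0"
          "(1::real) \<noteq> 0 \<longrightarrow> 0 < 1 * Im (1 * (\<integral>x. indicator T2 x * h x \<partial>M))"
          using Hpiece_ex[OF sf hm hb S2m p2[folded S2_def] S2c] by blast
        define H1 where "H1 = (\<integral>x. indicator T1 x * h x \<partial>M)"
        define H2 where "H2 = (\<integral>x. indicator T2 x * h x \<partial>M)"
        have h1: "Re H1 > 0" "Im H1 < 0" using T1(5,7) unfolding H1_def by auto
        have h2: "Re H2 > 0" "Im H2 > 0" using T2(5,7) unfolding H2_def by auto
        have Y1: "T1 \<inter> Y = {}" using T1(2) unfolding S1_def by auto
        have Y2: "T2 \<inter> Y = {}" using T2(2) unfolding S2_def by auto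
        define a1 where "a1 = Im H2"
        define a2 where "a2 = - Im H1"
        have a1: "a1 \<ge> 0" and a2: "a2 \<ge> 0" using h1 h2 by (auto simp: a1_def a2_def)
        note GP = Gpair[OF T1(1) T2(1) T1(3) T2(3) Y1 Y2 T1(4) T2(4) a1 a2]
        define \<kappa> where "\<kappa> = a1 * Re H1 + a2 * Re H2"
        have "\<kappa> = Im H2 * Re H1 - Im H1 * Re H2" by (simp add: \<kappa>_def a1_def a2_def)
        then have \<kappa>0: "\<kappa> > 0" using mult_pos_pos[OF h2(2) h1(1)] mult_neg_pos[OF h1(2) h2(1)] by linarith
        have "complex_of_real a1 * H1 + complex_of_real a2 * H2 = complex_of_real \<kappa>"
          by (simp add: complex_eq_iff \<kappa>_def a1_def a2_def algebra_simps)
        then show thesis using that[OF GP(1,2,3,4) \<kappa>0] GP(5) unfolding H1_def H2_def by simp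
      next
        assume "\<exists>B3. B3 \<in> sets borel \<and> B3 \<subseteq> {z. Re z > 0 \<and> Im z = 0} \<and>
                emeasure M ((space M - Y) \<inter> (h -` B3 \<inter> space M)) > 0"
        then obtain B3 where B3: "B3 \<in> sets borel" and B3s: "B3 \<subseteq> {z. Re z > 0 \<and> Im z = 0}"
          and p3: "emeasure M ((space M - Y) \<inter> (h -` B3 \<inter> space M)) > 0" by blast
        define S3 where "S3 = (space M - Y) \<inter> (h -` B3 \<inter> space M)"
        have S3m: "S3 \<in> sets M" unfolding S3_def by (rule Sset[OF Y B3])
        have S3c: "\<And>x. x \<in> S3 \<Longrightarrow> 0 < Re (1 * h x) \<and> ((0::real) = 0 \<longrightarrow> Im (1 * h x) = 0) \<and>
                    ((0::real) \<noteq> 0 \<longrightarrow> 0 < 0 * Im (1 * h x))"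
          using B3s unfolding S3_def by auto
        obtain T3 where T3: "T3 \<in> sets M" "T3 \<subseteq> S3" "emeasure M T3 < \<infinity>"
          "integrable M (\<lambda>x. indicator T3 x * h x)"
          "0 < Re (1 * (\<integral>x. indicator T3 x * h x \<partial>M))"
          "(0::real) = 0 \<longrightarrow> Im (1 * (\<integral>x. indicator T3 x * h x \<partial>M)) = 0"
          "(0::real) \<noteq> 0 \<longrightarrow> 0 < 0 * Im (1 * (\<integral>x. indicator T3 x * h x \<partial>M))"
          using Hpiece_ex[OF sf hm hb S3m p3[folded S3_def] S3c] by blast
        define H3 where "H3 = (\<integral>x. indicator T3 x * h x \<partial>M)"
        have h3: "Re H3 > 0" "Im H3 = 0" using T3(5,6) unfolding H3_def by auto
        have Y3: "T3 \<inter> Y = {}" using T3(2) unfolding S3_def by auto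
        note GP = Gpair[OF T3(1) T3(1) T3(3) T3(3) Y3 Y3 T3(4) T3(4), of 1 0]
        have "complex_of_real 1 * H3 + complex_of_real 0 * H3 = complex_of_real (Re H3)"
          using h3 by (simp add: complex_eq_iff)
        then show thesis using that[OF GP(1,2,3,4) h3(1)] GP(5) unfolding H3_def by simp
      qed
    qed
    have [measurable]: "G \<in> borel_measurable M" by (rule Gm)
    have \<rho>\<kappa>: "\<rho> * \<kappa> > 0" using \<rho>0 \<kappa>0 by simp
    define w where "w = (1 / sqrt (\<rho> * \<kappa>)) *\<^sub>R (- e)"
    have AS: "cont_frame M (\<lambda>x. 1 *\<^sub>R P x + sqrt (G x) *\<^sub>R w) \<and>
     q_map M h b (\<lambda>x. 1 *\<^sub>R P x + sqrt (G x) *\<^sub>R w) =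
     (\<chi> k. complex_of_real (1\<^sup>2) * q_map M h b P $ k
            + cinner_n b w * (\<integral>x. complex_of_real (G x) * h x \<partial>M) * w$k)"
      by (rule assemble[OF hm hb Pm P0 Pint A0 PA Gm G0 GY Gint zero_less_one])
    have cK: "complex_of_real \<rho> * complex_of_real \<kappa> = complex_of_real (\<rho> * \<kappa>)" by simp
    have F: "(\<chi> k. complex_of_real 1 * e$k + cinner_n b w * complex_of_real \<kappa> * w$k) = 1 *\<^sub>R e + (- e)"
      unfolding w_def by (rule finish[OF c' cK \<rho>\<kappa>])
    have "q_map M h b (\<lambda>x. 1 *\<^sub>R P x + sqrt (G x) *\<^sub>R w) = d"
      using AS F GK True unfolding e_def by simp
    then show ?thesis using AS by blast
  next
    case False
    obtain Y B1 B2 where Y[measurable]: "Y \<in> sets M" and L: "L2_dim_ge M Y TYPE('n)"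
      and B1: "B1 \<in> sets borel" and B2: "B2 \<in> sets borel"
      and B1s: "B1 \<subseteq> {z. Re (cinner_n b d * z) > \<epsilon> \<and> Im (cinner_n b d * z) < - \<epsilon>}"
      and B2s: "B2 \<subseteq> {z. Re (cinner_n b d * z) > \<epsilon> \<and> Im (cinner_n b d * z) > \<epsilon>}"
      and p1: "emeasure M ((space M - Y) \<inter> (h -` B1 \<inter> space M)) > 0"
      and p2: "emeasure M ((space M - Y) \<inter> (h -` B2 \<inter> space M)) > 0"
      using assms(5)[OF False] by blast
    define c where "c = cinner_n b d"
    obtain P :: "'a \<Rightarrow> complex^'n" and A where
      Pm: "\<And>k. (\<lambda>x. P x $ k) \<in> borel_measurable M" and
      P0: "\<And>x. x \<notin> Y \<Longrightarrow> P x = 0" and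
      Pint: "integrable M (\<lambda>x. (norm (P x))\<^sup>2)" and
      A0: "A > 0" and
      PA: "\<And>v. ennreal (A * (norm v)\<^sup>2) \<le> (\<integral>\<^sup>+ x. ennreal ((cmod (cinner_n v (P x)))\<^sup>2) \<partial>M)"
    proof -
      obtain P :: "'a \<Rightarrow> complex^'n" and A :: real where
        PP: "(\<forall>k. (\<lambda>x. P x $ k) \<in> borel_measurable M) \<and> (\<forall>x. x \<notin> Y \<longrightarrow> P x = 0) \<and>
         integrable M (\<lambda>x. (norm (P x))\<^sup>2) \<and> A > 0 \<and>
         (\<forall>v. ennreal (A * (norm v)\<^sup>2) \<le> (\<integral>\<^sup>+ x. ennreal ((cmod (cinner_n v (P x)))\<^sup>2) \<partial>M))"
        using frameY_ex[OF Y L] by blast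
      show thesis by (rule that[of P A]) (use PP in blast)+
    qed
    define e where "e = q_map M h b P"
    define \<beta> where "\<beta> = cinner_n b e"
    define S1 where "S1 = (space M - Y) \<inter> (h -` B1 \<inter> space M)"
    define S2 where "S2 = (space M - Y) \<inter> (h -` B2 \<inter> space M)"
    have S1m: "S1 \<in> sets M" unfolding S1_def by (rule Sset[OF Y B1])
    have S2m: "S2 \<in> sets M" unfolding S2_def by (rule Sset[OF Y B2])
    have S1c: "\<And>x. x \<in> S1 \<Longrightarrow> 0 < Re (c * h x) \<and> ((-1::real) = 0 \<longrightarrow> Im (c * h x) = 0) \<and>
                ((-1::real) \<noteq> 0 \<longrightarrow> 0 < (-1) * Im (c * h x))"
      using B1s assms(3) unfolding S1_def c_def by force
    have S2c: "\<And>x. x \<in> S2 \<Longrightarrow> 0 < Re (c * h x) \<and> ((1::real) = 0 \<longrightarrow> Im (c * h x) = 0) \<and>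
                ((1::real) \<noteq> 0 \<longrightarrow> 0 < 1 * Im (c * h x))"
      using B2s assms(3) unfolding S2_def c_def by force
    obtain T1 where T1: "T1 \<in> sets M" "T1 \<subseteq> S1" "emeasure M T1 < \<infinity>"
      "integrable M (\<lambda>x. indicator T1 x * h x)"
      "0 < Re (c * (\<integral>x. indicator T1 x * h x \<partial>M))"
      "(-1::real) = 0 \<longrightarrow> Im (c * (\<integral>x. indicator T1 x * h x \<partial>M)) = 0"
      "(-1::real) \<noteq> 0 \<longrightarrow> 0 < (-1) * Im (c * (\<integral>x. indicator T1 x * h x \<partial>M))"
      using Hpiece_ex[OF sf hm hb S1m p1[folded S1_def] S1c] by blast
    obtain T2 where T2: "T2 \<in> sets M" "T2 \<subseteq> S2" "emeasure M T2 < \<infinity>"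
      "integrable M (\<lambda>x. indicator T2 x * h x)"
      "0 < Re (c * (\<integral>x. indicator T2 x * h x \<partial>M))"
      "(1::real) = 0 \<longrightarrow> Im (c * (\<integral>x. indicator T2 x * h x \<partial>M)) = 0"
      "(1::real) \<noteq> 0 \<longrightarrow> 0 < 1 * Im (c * (\<integral>x. indicator T2 x * h x \<partial>M))"
      using Hpiece_ex[OF sf hm hb S2m p2[folded S2_def] S2c] by blast
    define H1 where "H1 = (\<integral>x. indicator T1 x * h x \<partial>M)"
    define H2 where "H2 = (\<integral>x. indicator T2 x * h x \<partial>M)"
    have h1: "Re (c * H1) > 0" "Im (c * H1) < 0" using T1(5,7) unfolding H1_def by auto
    have h2: "Re (c * H2) > 0" "Im (c * H2) > 0" using T2(5,7) unfolding H2_def by auto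
    define m where "m = min (min (Re (c * H1)) (- Im (c * H1))) (min (Re (c * H2)) (Im (c * H2)))"
    have m0: "m > 0" using h1 h2 by (simp add: m_def)
    have mle: "m \<le> Re (c * H1)" "m \<le> - Im (c * H1)" "m \<le> Re (c * H2)" "m \<le> Im (c * H2)"
      by (simp_all add: m_def)
    define D where "D = 1 + cmod \<beta> * (cmod H1 + cmod H2)"
    have D1: "D \<ge> 1" by (simp add: D_def)
    define \<tau> where "\<tau> = m / (2 * D)"
    have \<tau>0: "\<tau> > 0" using m0 D1 by (simp add: \<tau>_def)
    have \<tau>D: "\<tau> * D < m" using m0 D1 by (simp add: \<tau>_def)
    have bH1: "\<tau> * (cmod \<beta> * cmod H1) < m"
    proof -
      have "cmod \<beta> * cmod H1 \<le> D" unfolding D_def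
        by (smt (verit) mult_left_mono norm_ge_zero)
      then have "\<tau> * (cmod \<beta> * cmod H1) \<le> \<tau> * D" using \<tau>0 by (intro mult_left_mono) auto
      then show ?thesis using \<tau>D by simp
    qed
    have bH2: "\<tau> * (cmod \<beta> * cmod H2) < m"
    proof -
      have "cmod \<beta> * cmod H2 \<le> D" unfolding D_def
        by (smt (verit) mult_left_mono norm_ge_zero)
      then have "\<tau> * (cmod \<beta> * cmod H2) \<le> \<tau> * D" using \<tau>0 by (intro mult_left_mono) auto
      then show ?thesis using \<tau>D by simp
    qed
    define c' where "c' = c - complex_of_real \<tau> * \<beta>"
    note q1 = perturb[OF less_imp_le[OF \<tau>0] bH1, of c, folded c'_def]
    note q2 = perturb[OF less_imp_le[OF \<tau>0] bH2, of c, folded c'_def]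
    have g1: "Re (c' * H1) > 0" "Im (c' * H1) < 0" using q1 mle by linarith+
    have g2: "Re (c' * H2) > 0" "Im (c' * H2) > 0" using q2 mle by linarith+
    have Y1: "T1 \<inter> Y = {}" using T1(2) unfolding S1_def by auto
    have Y2: "T2 \<inter> Y = {}" using T2(2) unfolding S2_def by auto
    define a1 where "a1 = Im (c' * H2)"
    define a2 where "a2 = - Im (c' * H1)"
    have a1: "a1 \<ge> 0" and a2: "a2 \<ge> 0" using g1 g2 by (auto simp: a1_def a2_def)
    note GP = Gpair[OF T1(1) T2(1) T1(3) T2(3) Y1 Y2 T1(4) T2(4) a1 a2]
    define G where "G = (\<lambda>x. a1 * indicator T1 x + a2 * indicator T2 x :: real)"
    define K where "K = complex_of_real a1 * H1 + complex_of_real a2 * H2"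
    define \<kappa> where "\<kappa> = a1 * Re (c' * H1) + a2 * Re (c' * H2)"
    have "\<kappa> = Im (c' * H2) * Re (c' * H1) - Im (c' * H1) * Re (c' * H2)"
      unfolding \<kappa>_def a1_def a2_def by algebra
    then have \<kappa>0: "\<kappa> > 0" using mult_pos_pos[OF g2(2) g1(1)] mult_neg_pos[OF g1(2) g2(1)] by linarith
    have cKe: "c' * K = complex_of_real a1 * (c' * H1) + complex_of_real a2 * (c' * H2)"
      unfolding K_def by (simp add: algebra_simps)
    have cK: "c' * K = complex_of_real \<kappa>"
      unfolding cKe by (simp add: complex_eq_iff \<kappa>_def a1_def a2_def algebra_simps)
    have GK: "(\<integral>x. complex_of_real (G x) * h x \<partial>M) = K"
      using GP(5) unfolding G_def K_def H1_def H2_def .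
    define d' where "d' = d - \<tau> *\<^sub>R e"
    have cd': "cinner_n b d' = c'"
      unfolding d'_def c'_def c_def \<beta>_def by (simp add: cinner_diff_right cinner_scaleR_right)
    define w where "w = (1 / sqrt \<kappa>) *\<^sub>R d'"
    have t0: "sqrt \<tau> > 0" using \<tau>0 by simp
    have AS: "cont_frame M (\<lambda>x. sqrt \<tau> *\<^sub>R P x + sqrt (G x) *\<^sub>R w) \<and>
     q_map M h b (\<lambda>x. sqrt \<tau> *\<^sub>R P x + sqrt (G x) *\<^sub>R w) =
     (\<chi> k. complex_of_real ((sqrt \<tau>)\<^sup>2) * q_map M h b P $ k
            + cinner_n b w * (\<integral>x. complex_of_real (G x) * h x \<partial>M) * w$k)"
      using assemble[OF hm hb Pm P0 Pint A0 PA GP(1,2,3,4) t0] unfolding G_def by simp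
    have F: "(\<chi> k. complex_of_real \<tau> * e$k + cinner_n b w * K * w$k) = \<tau> *\<^sub>R e + d'"
      unfolding w_def by (rule finish[OF cd' cK \<kappa>0])
    have "q_map M h b (\<lambda>x. sqrt \<tau> *\<^sub>R P x + sqrt (G x) *\<^sub>R w) = d"
      using AS F GK \<tau>0 unfolding e_def d'_def by simp
    then show ?thesis using AS by blast
  qed
qed

end
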